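(* Let $m,k,d$ be positive integers with $d\ge k$, and let $a_1,\dots,a_k$ be positive integers with $a_1+\dots+a_k\le m$. Let $S$ be a uniformly random subset of $[m]$ of size $d$. Among all families $\{A_1,\dots,A_k\}$ of subsets of $[m]$ with $|A_i|=a_i$ for each $i$, the probability $$\mathbb P\big(\{S\cap A_1,\dots,S\cap A_k\}\text{ has a system of distinct representatives}\big)$$ is maximised when the sets $A_1,\dots,A_k$ are mutually disjoint.
   Context: A system of distinct representatives for sets $B_1,\dots,B_k$ is a choice of elements $b_i\in B_i$ with $b_1,\dots,b_k$ pairwise distinct. *)

theory Defs
  imports "HOL-Probability.Probability"
begin

definition has_SDR :: "nat \<Rightarrow> (nat \<Rightarrow> 'a set) \<Rightarrow> bool" where
  "has_SDR k B \<longleftrightarrow> (\<exists>b. (\<forall>i\<in>{1..k}. b i \<in> B i) \<and> inj_on b {1..k})"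

definition unif_subsets :: "nat \<Rightarrow> nat \<Rightarrow> nat set pmf" where
  "unif_subsets m d = pmf_of_set {S. S \<subseteq> {1..m} \<and> card S = d}"

definition SDR_prob :: "nat \<Rightarrow> nat \<Rightarrow> nat \<Rightarrow> (nat \<Rightarrow> nat set) \<Rightarrow> real" where
  "SDR_prob m d k A = measure_pmf.prob (unif_subsets m d) {S. has_SDR k (\<lambda>i. S \<inter> A i)}"

end

theory Submission
  imports Defs
begin

definition Om :: "nat \<Rightarrow> nat \<Rightarrow> nat set set" where
  "Om m d = {S. S \<subseteq> {1..m} \<and> card S = d}"

definition cnt :: "nat \<Rightarrow> nat \<Rightarrow> nat \<Rightarrow> (nat \<Rightarrow> nat set) \<Rightarrow> nat" where
  "cnt m d k A = card {S \<in> Om m d. has_SDR k (\<lambda>i. S \<inter> A i)}"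

lemma finite_Om: "finite (Om m d)"
proof -
  have "Om m d \<subseteq> Pow {1..m}" unfolding Om_def by auto
  then show ?thesis by (rule finite_subset) simp
qed

lemma Om_ne: "d \<le> m \<Longrightarrow> Om m d \<noteq> {}"
proof -
  assume "d \<le> m"
  then have "{1..d} \<in> Om m d" unfolding Om_def by auto
  then show ?thesis by blast
qed

lemma SDR_prob_cnt:
  assumes "d \<le> m"
  shows "SDR_prob m d k A = real (cnt m d k A) / real (card (Om m d))"
proof -
  have e: "unif_subsets m d = pmf_of_set (Om m d)" unfolding unif_subsets_def Om_def by simp
  have "Om m d \<inter> {S. has_SDR k (\<lambda>i. S \<inter> A i)} = {S \<in> Om m d. has_SDR k (\<lambda>i. S \<inter> A i)}" by auto
  then show ?thesis unfolding SDR_prob_def e cnt_def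
    using measure_pmf_of_set[OF Om_ne[OF assms] finite_Om] by simp
qed

lemma has_SDR_cong: "(\<forall>i\<in>{1..k}. B i = C i) \<Longrightarrow> has_SDR k B = has_SDR k C"
  unfolding has_SDR_def by auto

lemma cnt_cong: "(\<forall>i\<in>{1..k}. A i = D i) \<Longrightarrow> cnt m d k A = cnt m d k D"
proof -
  assume h: "\<forall>i\<in>{1..k}. A i = D i"
  have "\<And>S. has_SDR k (\<lambda>i. S \<inter> A i) = has_SDR k (\<lambda>i. S \<inter> D i)"
    by (rule has_SDR_cong) (use h in auto)
  then show ?thesis unfolding cnt_def by simp
qed

lemma move:
  assumes j: "j \<in> {1..k}" and x: "x \<in> A j" and y: "y \<in> {1..m}"
    and fresh: "\<forall>l\<in>{1..k}. y \<notin> A l"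
  shows "cnt m d k A \<le> cnt m d k (A(j := A j - {x} \<union> {y}))"
proof -
  define A' where "A' = A(j := A j - {x} \<union> {y})"
  define G where "G = {S \<in> Om m d. has_SDR k (\<lambda>i. S \<inter> A i)}"
  define G' where "G' = {S \<in> Om m d. has_SDR k (\<lambda>i. S \<inter> A' i)}"
  define f where "f S = (if has_SDR k (\<lambda>i. S \<inter> A' i) then S else S - {x} \<union> {y})" for S
  have xy: "x \<noteq> y" using fresh x j by auto
  have key: "x \<in> S \<and> y \<notin> S \<and> has_SDR k (\<lambda>i. (S - {x} \<union> {y}) \<inter> A' i)"
    if SG: "S \<in> G" and nA: "\<not> has_SDR k (\<lambda>i. S \<inter> A' i)" for S
  proof -
    obtain b where b: "\<forall>i\<in>{1..k}. b i \<in> S \<inter> A i" and ib: "inj_on b {1..k}"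
      using SG unfolding G_def has_SDR_def by auto
    have bjx: "b j = x"
    proof (rule ccontr)
      assume "b j \<noteq> x"
      then have "\<forall>i\<in>{1..k}. b i \<in> S \<inter> A' i" using b unfolding A'_def by auto
      then show False using nA ib unfolding has_SDR_def by blast
    qed
    have ynot: "y \<notin> b ` {1..k}" using b fresh by auto
    have ib2: "inj_on (b(j := y)) {1..k}" by (rule inj_on_fun_updI[OF ib ynot])
    have xS: "x \<in> S" using b j bjx by auto
    have yS: "y \<notin> S"
    proof
      assume "y \<in> S"
      then have "\<forall>i\<in>{1..k}. (b(j := y)) i \<in> S \<inter> A' i" using b unfolding A'_def by auto
      then show False using nA ib2 unfolding has_SDR_def by blast
    qed
    have "\<forall>i\<in>{1..k}. (b(j := y)) i \<in> (S - {x} \<union> {y}) \<inter> A' i"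
    proof
      fix i assume i: "i \<in> {1..k}"
      show "(b(j := y)) i \<in> (S - {x} \<union> {y}) \<inter> A' i"
      proof (cases "i = j")
        case True then show ?thesis unfolding A'_def by simp
      next
        case False
        then have "b i \<noteq> x" using ib i j bjx unfolding inj_on_def by metis
        then show ?thesis using False b i unfolding A'_def by auto
      qed
    qed
    then have "has_SDR k (\<lambda>i. (S - {x} \<union> {y}) \<inter> A' i)" using ib2 unfolding has_SDR_def by blast
    then show ?thesis using xS yS by blast
  qed
  have bk: "has_SDR k (\<lambda>i. S \<inter> A' i)"
    if h1: "x \<in> S" and h2: "y \<notin> S" and h3: "has_SDR k (\<lambda>i. (S - {x} \<union> {y}) \<inter> A i)" for S
  proof -
    obtain b where b: "\<forall>i\<in>{1..k}. b i \<in> (S - {x} \<union> {y}) \<inter> A i" and ib: "inj_on b {1..k}"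
      using h3 unfolding has_SDR_def by auto
    have "\<forall>i\<in>{1..k}. b i \<in> S \<inter> A' i" using b fresh unfolding A'_def by fastforce
    then show ?thesis using ib unfolding has_SDR_def by blast
  qed
  have fG: "f ` G \<subseteq> G'"
  proof
    fix T assume "T \<in> f ` G"
    then obtain S where S: "S \<in> G" and T: "T = f S" by auto
    show "T \<in> G'"
    proof (cases "has_SDR k (\<lambda>i. S \<inter> A' i)")
      case True then show ?thesis using S T unfolding f_def G_def G'_def by auto
    next
      case False
      note kk = key[OF S False]
      have SO: "S \<subseteq> {1..m}" "card S = d" using S unfolding G_def Om_def by auto
      have fin: "finite S" using SO(1) finite_subset by blast
      have "S - {x} \<union> {y} = insert y (S - {x})" by auto
      then have "card (S - {x} \<union> {y}) = card S"
        using kk fin card_Diff1_less[OF fin, of x] by (simp add: card_Diff_singleton)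
      then have "S - {x} \<union> {y} \<in> Om m d" using SO y unfolding Om_def by auto
      then show ?thesis using T False kk unfolding f_def G'_def by auto
    qed
  qed
  have inj: "inj_on f G"
  proof (rule inj_onI)
    fix S1 S2 assume S1: "S1 \<in> G" and S2: "S2 \<in> G" and eq: "f S1 = f S2"
    have mixed: False if a1: "has_SDR k (\<lambda>i. S1 \<inter> A' i)" and a2: "\<not> has_SDR k (\<lambda>i. S2 \<inter> A' i)"
      and e: "S1 = S2 - {x} \<union> {y}" and S1G: "S1 \<in> G" and S2G: "S2 \<in> G" for S1 S2
    proof -
      note kk = key[OF S2G a2]
      have "has_SDR k (\<lambda>i. (S2 - {x} \<union> {y}) \<inter> A i)" using S1G e unfolding G_def by auto
      then have "has_SDR k (\<lambda>i. S2 \<inter> A' i)" using bk kk by blast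
      then show False using a2 by blast
    qed
    show "S1 = S2"
    proof (cases "has_SDR k (\<lambda>i. S1 \<inter> A' i)"; cases "has_SDR k (\<lambda>i. S2 \<inter> A' i)")
      assume "has_SDR k (\<lambda>i. S1 \<inter> A' i)" "has_SDR k (\<lambda>i. S2 \<inter> A' i)"
      then show ?thesis using eq unfolding f_def by simp
    next
      assume a: "has_SDR k (\<lambda>i. S1 \<inter> A' i)" "\<not> has_SDR k (\<lambda>i. S2 \<inter> A' i)"
      then have "S1 = S2 - {x} \<union> {y}" using eq unfolding f_def by simp
      then show ?thesis using mixed a S1 S2 by blast
    next
      assume a: "\<not> has_SDR k (\<lambda>i. S1 \<inter> A' i)" "has_SDR k (\<lambda>i. S2 \<inter> A' i)"
      then have "S2 = S1 - {x} \<union> {y}" using eq unfolding f_def by simp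
      then show ?thesis using mixed a S1 S2 by blast
    next
      assume a: "\<not> has_SDR k (\<lambda>i. S1 \<inter> A' i)" "\<not> has_SDR k (\<lambda>i. S2 \<inter> A' i)"
      then have e: "S1 - {x} \<union> {y} = S2 - {x} \<union> {y}" using eq unfolding f_def by simp
      have "x \<in> S1" "y \<notin> S1" "x \<in> S2" "y \<notin> S2" using key[OF S1 a(1)] key[OF S2 a(2)] by auto
      then show ?thesis using e xy by blast
    qed
  qed
  have "finite G'" unfolding G'_def using finite_Om by simp
  then have "card G \<le> card G'" using card_inj_on_le[OF inj fG] by simp
  then show ?thesis unfolding cnt_def G_def G'_def A'_def .
qed


lemma card_UN_strict:
  assumes I: "finite I" and fin: "\<forall>l\<in>I. finite (A l)" and i: "i \<in> I" and j: "j \<in> I"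
    and ij: "i \<noteq> j" and xi: "x \<in> A i" and xj: "x \<in> A j"
  shows "card (\<Union>l\<in>I. A l) < (\<Sum>l\<in>I. card (A l))"
proof -
  have e: "(\<Union>l\<in>I. A l) = (\<Union>l\<in>I-{j}. A l) \<union> (A j - {x})" using i j ij xi by blast
  have "card (\<Union>l\<in>I. A l) \<le> card (\<Union>l\<in>I-{j}. A l) + card (A j - {x})"
    unfolding e by (rule card_Un_le)
  also have "\<dots> \<le> (\<Sum>l\<in>I-{j}. card (A l)) + card (A j - {x})"
    using card_UN_le[of "I-{j}" A] I by simp
  also have "\<dots> < (\<Sum>l\<in>I-{j}. card (A l)) + card (A j)"
    using card_Diff1_less[of "A j" x] fin j xj by simp
  also have "\<dots> = (\<Sum>l\<in>I. card (A l))" using sum.remove[OF I j, of "\<lambda>l. card (A l)"] by simp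
  finally show ?thesis .
qed

lemma phase1:
  assumes "\<forall>i\<in>{1..k}. A i \<subseteq> {1..m} \<and> card (A i) = a i" and "(\<Sum>i=1..k. a i) \<le> m"
  shows "\<exists>A'. (\<forall>i\<in>{1..k}. A' i \<subseteq> {1..m} \<and> card (A' i) = a i)
     \<and> (\<forall>i\<in>{1..k}. \<forall>j\<in>{1..k}. i \<noteq> j \<longrightarrow> A' i \<inter> A' j = {}) \<and> cnt m d k A \<le> cnt m d k A'"
  using assms(1)
proof (induction "m - card (\<Union>i\<in>{1..k}. A i)" arbitrary: A rule: less_induct)
  case less
  show ?case
  proof (cases "\<forall>i\<in>{1..k}. \<forall>j\<in>{1..k}. i \<noteq> j \<longrightarrow> A i \<inter> A j = {}")
    case True then show ?thesis using less.prems by blast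
  next
    case False
    then obtain i j x where i: "i \<in> {1..k}" and j: "j \<in> {1..k}" and ij: "i \<noteq> j"
      and xi: "x \<in> A i" and xj: "x \<in> A j" by blast
    define U where "U = (\<Union>l\<in>{1..k}. A l)"
    have fin: "\<forall>l\<in>{1..k}. finite (A l)" using less.prems finite_subset by blast
    have "card U < (\<Sum>l\<in>{1..k}. card (A l))" unfolding U_def
      by (rule card_UN_strict[OF _ fin i j ij xi xj]) simp
    also have "\<dots> = (\<Sum>l\<in>{1..k}. a l)" using less.prems by simp
    finally have cU: "card U < m" using assms(2) by simp
    have Usub: "U \<subseteq> {1..m}" unfolding U_def using less.prems by blast
    have "U \<noteq> {1..m}" using cU by auto
    then obtain y where y: "y \<in> {1..m}" and yU: "y \<notin> U" using Usub by blast
    define A2 where "A2 = A(j := A j - {x} \<union> {y})"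
    have fresh: "\<forall>l\<in>{1..k}. y \<notin> A l" using yU unfolding U_def by blast
    have mv: "cnt m d k A \<le> cnt m d k A2" unfolding A2_def by (rule move[OF j xj y fresh])
    have "A j - {x} \<union> {y} = insert y (A j - {x})" by auto
    then have cj: "card (A j - {x} \<union> {y}) = card (A j)"
      using fin j xj fresh card_Diff1_less[of "A j" x] by (simp add: card_Diff_singleton)
    have v2: "\<forall>l\<in>{1..k}. A2 l \<subseteq> {1..m} \<and> card (A2 l) = a l"
      using less.prems y cj unfolding A2_def by auto
    have U2: "(\<Union>l\<in>{1..k}. A2 l) = insert y U"
      unfolding A2_def U_def using i j ij xi xj by auto
    have finU: "finite U" using Usub finite_subset by blast
    have "card (\<Union>l\<in>{1..k}. A2 l) = card U + 1" unfolding U2 using finU yU by simp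
    then have "m - card (\<Union>l\<in>{1..k}. A2 l) < m - card (\<Union>l\<in>{1..k}. A l)"
      using cU unfolding U_def by simp
    from less.hyps[OF this v2] mv show ?thesis using le_trans by blast
  qed
qed

definition sw :: "nat \<Rightarrow> nat \<Rightarrow> nat \<Rightarrow> nat" where
  "sw x z u = (if u = x then z else if u = z then x else u)"

lemma sw_sw[simp]: "sw x z (sw x z u) = u" unfolding sw_def by auto

lemma inj_sw: "inj (sw x z)" by (metis injI sw_sw)

lemma sw_image_iff: "u \<in> sw x z ` X \<longleftrightarrow> sw x z u \<in> X"
  by (metis image_iff sw_sw)

lemma sw_img: "u \<in> sw x z ` X \<longleftrightarrow> (u = x \<and> z \<in> X) \<or> (u = z \<and> x \<in> X) \<or> (u \<noteq> x \<and> u \<noteq> z \<and> u \<in> X)"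
  unfolding sw_image_iff sw_def by auto

lemma transp_le:
  assumes x: "x \<in> {1..m}" and z: "z \<in> {1..m}"
  shows "cnt m d k A \<le> cnt m d k (\<lambda>i. sw x z ` A i)"
proof -
  define G where "G = {S \<in> Om m d. has_SDR k (\<lambda>i. S \<inter> A i)}"
  define G' where "G' = {S \<in> Om m d. has_SDR k (\<lambda>i. S \<inter> sw x z ` A i)}"
  have inj: "inj_on (image (sw x z)) G"
    by (rule inj_onI) (metis inj_sw inj_image_eq_iff)
  have sub: "image (sw x z) ` G \<subseteq> G'"
  proof
    fix T assume "T \<in> image (sw x z) ` G"
    then obtain S where S: "S \<in> G" and T: "T = sw x z ` S" by auto
    obtain b where b: "\<forall>i\<in>{1..k}. b i \<in> S \<inter> A i" and ib: "inj_on b {1..k}"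
      using S unfolding G_def has_SDR_def by auto
    have "\<forall>i\<in>{1..k}. (sw x z \<circ> b) i \<in> T \<inter> sw x z ` A i" using b T by auto
    moreover have "inj_on (sw x z \<circ> b) {1..k}"
      using ib inj_sw by (metis comp_inj_on inj_on_subset subset_UNIV)
    ultimately have h: "has_SDR k (\<lambda>i. T \<inter> sw x z ` A i)" unfolding has_SDR_def by blast
    have SO: "S \<subseteq> {1..m}" "card S = d" using S unfolding G_def Om_def by auto
    have "T \<subseteq> {1..m}" using SO(1) x z unfolding T sw_def by auto
    moreover have "card T = d" using SO(2) T card_image inj_sw by (metis inj_on_subset subset_UNIV)
    ultimately show "T \<in> G'" using h unfolding G'_def Om_def by auto
  qed
  have "finite G'" unfolding G'_def using finite_Om by simp
  then have "card G \<le> card G'" using card_inj_on_le[OF inj sub] by simp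
  then show ?thesis unfolding cnt_def G_def G'_def .
qed


lemma phase2:
  assumes vD: "\<forall>i\<in>{1..k}. D i \<subseteq> {1..m} \<and> card (D i) = a i"
    and dD: "\<forall>i\<in>{1..k}. \<forall>j\<in>{1..k}. i \<noteq> j \<longrightarrow> D i \<inter> D j = {}"
  shows "(\<forall>i\<in>{1..k}. A i \<subseteq> {1..m} \<and> card (A i) = a i) \<Longrightarrow>
    (\<forall>i\<in>{1..k}. \<forall>j\<in>{1..k}. i \<noteq> j \<longrightarrow> A i \<inter> A j = {}) \<Longrightarrow> cnt m d k A \<le> cnt m d k D"
proof (induction "\<Sum>i=1..k. card (A i - D i)" arbitrary: A rule: less_induct)
  case less
  have finA: "\<forall>i\<in>{1..k}. finite (A i)"
  proof
    fix i assume "i \<in> {1..k}"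
    then have "A i \<subseteq> {1..m}" using less.prems(1) by blast
    then show "finite (A i)" by (rule finite_subset) simp
  qed
  have finD: "\<forall>i\<in>{1..k}. finite (D i)"
  proof
    fix i assume "i \<in> {1..k}"
    then have "D i \<subseteq> {1..m}" using vD by blast
    then show "finite (D i)" by (rule finite_subset) simp
  qed
  show ?case
  proof (cases "(\<Sum>i=1..k. card (A i - D i)) = 0")
    case True
    have "\<forall>i\<in>{1..k}. A i = D i"
    proof
      fix i assume i: "i \<in> {1..k}"
      have "card (A i - D i) = 0" using True i by simp
      then have "A i - D i = {}" using finA i by simp
      then have "A i \<subseteq> D i" by blast
      then show "A i = D i"
        by (rule card_subset_eq[rotated]) (use finD i less.prems(1) vD in auto)
    qed
    then show ?thesis using cnt_cong[of k A D m d] by simp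
  next
    case False
    have "\<exists>j\<in>{1..k}. card (A j - D j) \<noteq> 0"
    proof (rule ccontr)
      assume "\<not> (\<exists>j\<in>{1..k}. card (A j - D j) \<noteq> 0)"
      then have "\<forall>j\<in>{1..k}. card (A j - D j) = 0" by blast
      from sum.neutral[OF this] False show False by simp
    qed
    then obtain j where j: "j \<in> {1..k}" and c0: "card (A j - D j) \<noteq> 0" by blast
    have "A j - D j \<noteq> {}" using c0 by (metis card.empty)
    then obtain x where xA: "x \<in> A j" and xD: "x \<notin> D j" by blast
    have "\<not> D j \<subseteq> A j"
    proof
      assume "D j \<subseteq> A j"
      then have "D j = A j"
        by (rule card_subset_eq[rotated]) (use finA j less.prems(1) vD in auto)
      then show False using xA xD by blast
    qed
    then obtain z where zD: "z \<in> D j" and zA: "z \<notin> A j" by blast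
    have xm: "x \<in> {1..m}" using xA j less.prems(1) by blast
    have zm: "z \<in> {1..m}" using zD j vD by blast
    define A2 where "A2 i = sw x z ` A i" for i
    have tl: "cnt m d k A \<le> cnt m d k A2" unfolding A2_def by (rule transp_le[OF xm zm])
    have v2: "\<forall>i\<in>{1..k}. A2 i \<subseteq> {1..m} \<and> card (A2 i) = a i"
    proof
      fix i assume i: "i \<in> {1..k}"
      have "A2 i \<subseteq> {1..m}" using less.prems(1) i xm zm unfolding A2_def sw_def by auto
      moreover have "card (A2 i) = card (A i)" unfolding A2_def
        using card_image[OF inj_on_subset[OF inj_sw subset_UNIV]] by blast
      ultimately show "A2 i \<subseteq> {1..m} \<and> card (A2 i) = a i" using less.prems(1) i by simp
    qed
    have d2: "\<forall>i\<in>{1..k}. \<forall>l\<in>{1..k}. i \<noteq> l \<longrightarrow> A2 i \<inter> A2 l = {}"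
    proof (intro ballI impI)
      fix i l assume i: "i \<in> {1..k}" and l: "l \<in> {1..k}" and il: "i \<noteq> l"
      have "A2 i \<inter> A2 l = sw x z ` (A i \<inter> A l)" unfolding A2_def by (rule image_Int[OF inj_sw, symmetric])
      then show "A2 i \<inter> A2 l = {}" using less.prems(2) i l il by simp
    qed
    have le: "\<forall>i\<in>{1..k}. card (A2 i - D i) \<le> card (A i - D i)"
    proof
      fix i assume i: "i \<in> {1..k}"
      show "card (A2 i - D i) \<le> card (A i - D i)"
      proof (cases "i = j")
        case True
        have "A2 i - D i \<subseteq> A i - D i" using True xA zA zD unfolding A2_def subset_iff Diff_iff insert_iff sw_img
          by blast
        then show ?thesis using finA i by (meson card_mono finite_Diff)
      next
        case False
        have xAi: "x \<notin> A i" using less.prems(2) False i j xA by blast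
        have zDi: "z \<notin> D i" using dD False i j zD by blast
        show ?thesis
        proof (cases "z \<in> A i")
          case True
          have "A2 i - D i \<subseteq> insert x (A i - D i - {z})" unfolding A2_def subset_iff Diff_iff insert_iff sw_img
            using xAi by blast
          then have "card (A2 i - D i) \<le> card (insert x (A i - D i - {z}))"
            using finA i by (meson card_mono finite_Diff finite_insert)
          also have "\<dots> \<le> card (A i - D i - {z}) + 1" by (simp add: card_insert_le_m1)
          also have "\<dots> = card (A i - D i)" proof -
            have zz: "z \<in> A i - D i" using True zDi by blast
            have ff: "finite (A i - D i)" using finA i by blast
            have "card (A i - D i) > 0" using zz ff card_gt_0_iff by blast
            then show ?thesis using card_Diff_singleton[OF zz] by simp
          qed
          finally show ?thesis .
        next
          case False
          have "A2 i - D i \<subseteq> A i - D i" unfolding A2_def subset_iff Diff_iff insert_iff sw_img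
            using xAi False by blast
          then show ?thesis using finA i by (meson card_mono finite_Diff)
        qed
      qed
    qed
    have lt: "card (A2 j - D j) < card (A j - D j)"
    proof -
      have "A2 j - D j \<subseteq> A j - D j - {x}" using xA zA zD unfolding A2_def subset_iff Diff_iff insert_iff sw_img
        by blast
      then have "card (A2 j - D j) \<le> card (A j - D j - {x})"
        using finA j by (meson card_mono finite_Diff)
      also have "\<dots> < card (A j - D j)" proof (rule card_Diff1_less)
        show "finite (A j - D j)" using finA j by blast
        show "x \<in> A j - D j" using xA xD by blast
      qed
      finally show ?thesis .
    qed
    have "(\<Sum>i=1..k. card (A2 i - D i)) < (\<Sum>i=1..k. card (A i - D i))"
      by (rule sum_strict_mono_ex1) (use le lt j in auto)
    from less.hyps[OF this v2 d2] tl show ?thesis by simp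
  qed
qed

theorem mainTheorem10:
  fixes m k d :: nat and a :: "nat \<Rightarrow> nat" and A D :: "nat \<Rightarrow> nat set"
  assumes "m > 0" "k > 0" "d > 0" "d \<ge> k" "d \<le> m"
    and "\<forall>i\<in>{1..k}. a i > 0"
    and "(\<Sum>i=1..k. a i) \<le> m"
    and "\<forall>i\<in>{1..k}. A i \<subseteq> {1..m} \<and> card (A i) = a i"
    and "\<forall>i\<in>{1..k}. D i \<subseteq> {1..m} \<and> card (D i) = a i"
    and "\<forall>i\<in>{1..k}. \<forall>j\<in>{1..k}. i \<noteq> j \<longrightarrow> D i \<inter> D j = {}"
  shows "SDR_prob m d k A \<le> SDR_prob m d k D"
proof -
  obtain A' where v: "\<forall>i\<in>{1..k}. A' i \<subseteq> {1..m} \<and> card (A' i) = a i"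
    and dj: "\<forall>i\<in>{1..k}. \<forall>j\<in>{1..k}. i \<noteq> j \<longrightarrow> A' i \<inter> A' j = {}"
    and c1: "cnt m d k A \<le> cnt m d k A'"
    using phase1[OF assms(8) assms(7)] by blast
  have c2: "cnt m d k A' \<le> cnt m d k D" by (rule phase2[OF assms(9) assms(10) v dj])
  have "real (cnt m d k A) \<le> real (cnt m d k D)" using c1 c2 by simp
  then show ?thesis unfolding SDR_prob_cnt[OF assms(5)]
    by (simp add: divide_right_mono)
qed

end
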